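(* Let $F$ be a non-archimedean local field of characteristic different from $2$ and residual characteristic $p$, and $\ell\neq p$ an odd prime. Let $\chi$ be an $\overline{\mathbf{F}}_\ell$-character of $F^\times$ with $\chi^2=\mathbf{1}$. Then $\mathrm{Ext}^1_{\mathrm{GL}_2(F)}(\mathbf{1},\chi\circ\det)=0$, where $\mathrm{Ext}^1_{\mathrm{GL}_2(F)}$ is computed in the category of smooth $\overline{\mathbf{F}}_\ell$-representations of $\mathrm{GL}_2(F)$ with trivial central character. *)

theory Defs
  imports "HOL-Analysis.Analysis" "HOL-Computational_Algebra.Polynomial"
begin

text \<open>A discrete valuation v is only meaningful on nonzero elements; v x = infinity for x = 0
  is encoded by val_ge.\<close>

definition val_ge :: "('f::field \<Rightarrow> int) \<Rightarrow> 'f \<Rightarrow> int \<Rightarrow> bool" where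
  "val_ge v x n \<longleftrightarrow> x = 0 \<or> n \<le> v x"

definition nonarch_local_field :: "('f::field \<Rightarrow> int) \<Rightarrow> bool" where
  "nonarch_local_field v \<longleftrightarrow>
     (\<forall>x y. x \<noteq> 0 \<longrightarrow> y \<noteq> 0 \<longrightarrow> v (x * y) = v x + v y) \<and>
     (\<forall>x y. x \<noteq> 0 \<longrightarrow> y \<noteq> 0 \<longrightarrow> x + y \<noteq> 0 \<longrightarrow> min (v x) (v y) \<le> v (x + y)) \<and>
     (\<exists>\<pi>. \<pi> \<noteq> 0 \<and> v \<pi> = 1) \<and>
     (\<forall>X :: nat \<Rightarrow> 'f.
        (\<forall>n. \<exists>N. \<forall>m\<ge>N. \<forall>m'\<ge>N. val_ge v (X m - X m') n) \<longrightarrow>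
        (\<exists>L. \<forall>n. \<exists>N. \<forall>m\<ge>N. val_ge v (X m - L) n)) \<and>
     (\<exists>S. finite S \<and> (\<forall>x. val_ge v x 0 \<longrightarrow> (\<exists>s\<in>S. val_ge v (x - s) 1)))"

text \<open>Residual characteristic p: p is prime and p = 0 in the residue field.\<close>

definition residual_char :: "('f::field \<Rightarrow> int) \<Rightarrow> nat \<Rightarrow> bool" where
  "residual_char v p \<longleftrightarrow> prime p \<and> val_ge v (of_nat p) 1"

definition GL2 :: "('f::field^2^2) set" where
  "GL2 = {g. det g \<noteq> 0}"

text \<open>K(n) = 1 + pi^n M_2(O), n \<ge> 1: a neighbourhood basis of 1 in GL_2(F).\<close>

definition congr_subgroup :: "('f::field \<Rightarrow> int) \<Rightarrow> int \<Rightarrow> ('f^2^2) set" where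
  "congr_subgroup v n = {g \<in> GL2. \<forall>i j. val_ge v (g $ i $ j - mat 1 $ i $ j) n}"

definition scalar_mat :: "'f::field \<Rightarrow> 'f^2^2" where
  "scalar_mat z = mat z"

definition is_alg_closure_of_Fl :: "'k::field itself \<Rightarrow> nat \<Rightarrow> bool" where
  "is_alg_closure_of_Fl _ l \<longleftrightarrow>
     CHAR('k) = l \<and>
     (\<forall>q :: 'k poly. 0 < degree q \<longrightarrow> (\<exists>x. poly q x = 0)) \<and>
     (\<forall>x :: 'k. \<exists>q :: 'k poly. q \<noteq> 0 \<and> (\<forall>i. coeff q i \<in> range of_nat) \<and> poly q x = 0)"

definition smooth_character :: "('f::field \<Rightarrow> int) \<Rightarrow> ('f \<Rightarrow> 'k::field) \<Rightarrow> bool" where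
  "smooth_character v chi \<longleftrightarrow>
     (\<forall>x. x \<noteq> 0 \<longrightarrow> chi x \<noteq> 0) \<and>
     (\<forall>x y. x \<noteq> 0 \<longrightarrow> y \<noteq> 0 \<longrightarrow> chi (x * y) = chi x * chi y) \<and>
     (\<exists>n\<ge>1. \<forall>u. val_ge v (u - 1) n \<longrightarrow> chi u = 1)"

text \<open>A smooth representation of GL_2(F) on the k-vector space ('e, smul) with trivial central
  character.  The action is only relevant on GL2.\<close>

definition smooth_rep_triv_central ::
  "('f::field \<Rightarrow> int) \<Rightarrow> ('k::field \<Rightarrow> 'e::ab_group_add \<Rightarrow> 'e) \<Rightarrow> ('f^2^2 \<Rightarrow> 'e \<Rightarrow> 'e) \<Rightarrow> bool" where
  "smooth_rep_triv_central v smul act \<longleftrightarrow>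
     Vector_Spaces.vector_space smul \<and>
     (\<forall>g\<in>GL2. Vector_Spaces.linear smul smul (act g)) \<and>
     (\<forall>x. act (mat 1) x = x) \<and>
     (\<forall>g\<in>GL2. \<forall>h\<in>GL2. \<forall>x. act (g ** h) x = act g (act h x)) \<and>
     (\<forall>x. \<exists>n\<ge>1. \<forall>g\<in>congr_subgroup v n. act g x = x) \<and>
     (\<forall>z x. z \<noteq> 0 \<longrightarrow> act (scalar_mat z) x = x)"

text \<open>Ext^1(1, chi o det) = 0 in the category of smooth k-representations of GL_2(F) with trivial
  central character, via Yoneda: every short exact sequence
  0 -> chi o det -> E -> 1 -> 0 in this category splits.  Both chi o det and 1 are realised on the
  one-dimensional space k.  The type 'e of the middle term is universally quantified.\<close>

definition ext1_triv_chidet_splits ::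
  "('f::field \<Rightarrow> int) \<Rightarrow> ('f \<Rightarrow> 'k::field) \<Rightarrow> ('k \<Rightarrow> 'e::ab_group_add \<Rightarrow> 'e) \<Rightarrow> bool" where
  "ext1_triv_chidet_splits v chi smul \<longleftrightarrow>
     (\<forall>(act :: 'f^2^2 \<Rightarrow> 'e \<Rightarrow> 'e) (i :: 'k \<Rightarrow> 'e) (q :: 'e \<Rightarrow> 'k).
        smooth_rep_triv_central v smul act \<and>
        Vector_Spaces.linear (*) smul i \<and> inj i \<and>
        Vector_Spaces.linear smul (*) q \<and> surj q \<and>
        range i = {x. q x = 0} \<and>
        (\<forall>g\<in>GL2. \<forall>a. act g (i a) = i (chi (det g) * a)) \<and>
        (\<forall>g\<in>GL2. \<forall>x. q (act g x) = q x)
        \<longrightarrow>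
        (\<exists>s :: 'k \<Rightarrow> 'e. Vector_Spaces.linear (*) smul s \<and>
            (\<forall>a. q (s a) = a) \<and> (\<forall>g\<in>GL2. \<forall>a. act g (s a) = s a)))"

end

theory Submission imports Defs begin

definition mk :: "'f::field \<Rightarrow> 'f \<Rightarrow> 'f \<Rightarrow> 'f \<Rightarrow> 'f^2^2" where
  "mk a b c d = (\<chi> i j. if i = 1 then (if j = 1 then a else b) else (if j = 1 then c else d))"

lemma mk_nth[simp]: "mk a b c d $ 1 $ 1 = a" "mk a b c d $ 1 $ 2 = b"
  "mk a b c d $ 2 $ 1 = c" "mk a b c d $ 2 $ 2 = d"
  by (simp_all add: mk_def)

lemma mk_eta: "(g::'f::field^2^2) = mk (g$1$1) (g$1$2) (g$2$1) (g$2$2)"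
  by (simp add: vec_eq_iff forall_2)

lemma mk_eq_iff: "mk a b c d = mk a' b' c' d' \<longleftrightarrow> a = a' \<and> b = b' \<and> c = c' \<and> d = d'"
  by (metis mk_nth)

lemma mk_mult: "mk a b c d ** mk a' b' c' d' = mk (a*a'+b*c') (a*b'+b*d') (c*a'+d*c') (c*b'+d*d')"
  by (simp add: vec_eq_iff forall_2 matrix_matrix_mult_def sum_2)

lemma mk_det: "det (mk a b c d) = a*d - b*c"
  by (simp add: det_2)

lemma mk_one: "mat 1 = mk 1 0 0 (1::'f::field)"
  by (simp add: vec_eq_iff forall_2 mat_def)

lemma mk_scalar: "scalar_mat z = mk z 0 0 (z::'f::field)"
  by (simp add: vec_eq_iff forall_2 mat_def scalar_mat_def)

lemma GL2_mk: "mk a b c d \<in> GL2 \<longleftrightarrow> a*d - b*c \<noteq> 0"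
  by (simp add: GL2_def mk_det)

lemma cocycle_trivial:
  fixes c :: "'f::field^2^2 \<Rightarrow> 'k::field" and chi :: "'f \<Rightarrow> 'k"
  assumes mult: "\<forall>x y. x\<noteq>0 \<longrightarrow> y\<noteq>0 \<longrightarrow> chi(x*y) = chi x * chi y"
  and nz: "\<forall>x. x\<noteq>0 \<longrightarrow> chi x \<noteq> 0"
  and coc: "\<forall>g\<in>GL2. \<forall>h\<in>GL2. c (g**h) = c g + chi(det g) * c h"
  and one: "c (mat 1) = 0"
  and U0: "\<exists>y\<noteq>0. c (mk 1 y 0 1) = 0"
  and L0: "\<exists>y\<noteq>0. c (mk 1 0 y 1) = 0"
  and sc: "\<forall>z. z\<noteq>0 \<longrightarrow> c (scalar_mat z) = 0"
  and two: "(2::'k) \<noteq> 0"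
  shows "\<exists>x. \<forall>g\<in>GL2. c g = (1 - chi (det g)) * x"
proof -
  have chi1: "chi 1 = 1"
  proof -
    have "chi 1 = chi 1 * chi 1" using mult[rule_format, of 1 1] by simp
    then show ?thesis using nz by (metis mult_cancel_left1 zero_neq_one)
  qed
  have c1: "c (mk 1 0 0 1) = 0" using one mk_one by metis
  have coc': "c (g**h) = c g + chi(det g) * c h" if "det g \<noteq> 0" "det h \<noteq> 0" for g h
    using coc that by (simp add: GL2_def)
  define D where "D a b = mk a 0 0 b" for a b :: 'f
  define U where "U y = mk 1 y 0 1" for y :: 'f
  define L where "L y = mk 1 0 y 1" for y :: 'f
  have cD: "c (D t 1) + chi t * c (D (1/t) 1) = 0" if "t \<noteq> 0" for t
  proof -
    have "D t 1 ** D (1/t) 1 = mk 1 0 0 1" using that by (simp add: D_def mk_mult)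
    then show ?thesis using coc[rule_format, of "D t 1" "D (1/t) 1"] that c1
      by (simp add: D_def GL2_mk mk_det)
  qed
  have cD': "c (D 1 t) + chi t * c (D 1 (1/t)) = 0" if "t \<noteq> 0" for t
  proof -
    have "D 1 t ** D 1 (1/t) = mk 1 0 0 1" using that by (simp add: D_def mk_mult)
    then show ?thesis using coc[rule_format, of "D 1 t" "D 1 (1/t)"] that c1
      by (simp add: D_def GL2_mk mk_det)
  qed
  have Uconj: "c (U (t*y)) = chi t * c (U y)" if "t \<noteq> 0" for t y
  proof -
    have e: "D t 1 ** (U y ** D (1/t) 1) = U (t*y)" using that by (simp add: D_def U_def mk_mult)
    have "c (D t 1 ** (U y ** D (1/t) 1)) = c (D t 1) + chi (det (D t 1)) * c (U y ** D (1/t) 1)"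
      using that by (intro coc') (simp_all add: D_def U_def mk_det det_mul)
    also have "c (U y ** D (1/t) 1) = c (U y) + chi (det (U y)) * c (D (1/t) 1)"
      using that by (intro coc') (simp_all add: D_def U_def mk_det det_mul)
    finally have "c (D t 1 ** (U y ** D (1/t) 1)) = c (D t 1) + chi t * (c (U y) + c (D (1/t) 1))"
      using chi1 by (simp add: D_def U_def mk_det)
    also have "\<dots> = chi t * c (U y)" using cD[OF that] by (simp add: algebra_simps)
    finally show ?thesis using e by simp
  qed
  have Lconj: "c (L (t*y)) = chi t * c (L y)" if "t \<noteq> 0" for t y
  proof -
    have e: "D 1 t ** (L y ** D 1 (1/t)) = L (t*y)" using that by (simp add: D_def L_def mk_mult)
    have "c (D 1 t ** (L y ** D 1 (1/t))) = c (D 1 t) + chi (det (D 1 t)) * c (L y ** D 1 (1/t))"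
      using that by (intro coc') (simp_all add: D_def L_def mk_det det_mul)
    also have "c (L y ** D 1 (1/t)) = c (L y) + chi (det (L y)) * c (D 1 (1/t))"
      using that by (intro coc') (simp_all add: D_def L_def mk_det det_mul)
    finally have "c (D 1 t ** (L y ** D 1 (1/t))) = c (D 1 t) + chi t * (c (L y) + c (D 1 (1/t)))"
      using chi1 by (simp add: D_def L_def mk_det)
    also have "\<dots> = chi t * c (L y)" using cD'[OF that] by (simp add: algebra_simps)
    finally show ?thesis using e by simp
  qed
  have cU: "c (U y) = 0" for y
  proof -
    obtain y0 where y0: "y0 \<noteq> 0" "c (U y0) = 0" using U0 U_def by auto
    show ?thesis
    proof (cases "y = 0")
      case True then show ?thesis using c1 by (simp add: U_def)
    next
      case False
      have "c (U ((y/y0)*y0)) = chi (y/y0) * c (U y0)" using False y0 by (intro Uconj) simp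
      then show ?thesis using y0 by simp
    qed
  qed
  have cL: "c (L y) = 0" for y
  proof -
    obtain y0 where y0: "y0 \<noteq> 0" "c (L y0) = 0" using L0 L_def by auto
    show ?thesis
    proof (cases "y = 0")
      case True then show ?thesis using c1 by (simp add: L_def)
    next
      case False
      have "c (L ((y/y0)*y0)) = chi (y/y0) * c (L y0)" using False y0 by (intro Lconj) simp
      then show ?thesis using y0 by simp
    qed
  qed
  have ULU: "c (U x ** (L z ** U y)) = 0" for x y z
  proof -
    have "c (U x ** (L z ** U y)) = c (U x) + chi (det (U x)) * c (L z ** U y)"
      by (intro coc') (simp_all add: U_def L_def mk_det det_mul)
    also have "c (L z ** U y) = c (L z) + chi (det (L z)) * c (U y)"
      by (intro coc') (simp_all add: U_def L_def mk_det det_mul)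
    finally show ?thesis using cU cL by simp
  qed
  have SL0: "c m = 0" if "det m = 1" for m
  proof -
    obtain a b cc d where m: "m = mk a b cc d" using mk_eta by metis
    have dt: "a*d - b*cc = 1" using that m mk_det by metis
    have main: "c (mk a b cc d) = 0" if "cc \<noteq> 0" "a*d - b*cc = 1" for a b cc d :: 'f
    proof -
      have "U ((a-1)/cc) ** (L cc ** U ((d-1)/cc)) = mk a b cc d"
        using that unfolding U_def L_def mk_mult mk_eq_iff
        by (auto simp: field_simps)
      then show ?thesis using ULU by metis
    qed
    show ?thesis
    proof (cases "cc = 0")
      case False then show ?thesis using main dt m by simp
    next
      case True
      then have a0: "a \<noteq> 0" using dt by auto
      have e: "L (-1) ** mk a b (a+cc) (b+d) = mk a b cc d"
        by (simp add: L_def mk_mult)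
      have "c (mk a b (a+cc) (b+d)) = 0" using main[where a=a and b=b and cc="a+cc" and d="b+d"] a0 True dt
        by (simp add: algebra_simps)
      moreover have "c (L (-1) ** mk a b (a+cc) (b+d)) = c (L (-1)) + chi (det (L (-1))) * c (mk a b (a+cc) (b+d))"
        using dt True by (intro coc') (simp_all add: L_def mk_det algebra_simps)
      ultimately have "c (L (-1) ** mk a b (a+cc) (b+d)) = 0" using cL by simp
      then show ?thesis using e m by simp
    qed
  qed
  define phi where "phi a = c (D a 1)" for a
  have cphi: "c g = phi (det g)" if "g \<in> GL2" for g
  proof -
    let ?d = "det g"
    have d0: "?d \<noteq> 0" using that by (simp add: GL2_def)
    obtain a b cc d where m: "g = mk a b cc d" using mk_eta by metis
    have dd: "?d = a*d - b*cc" using m mk_det by metis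
    have e: "(g ** D (1/?d) 1) ** D ?d 1 = g" using d0 unfolding m D_def mk_mult by simp
    have dm: "det (g ** D (1/?d) 1) = 1" using d0 by (simp add: det_mul D_def mk_det)
    have "c ((g ** D (1/?d) 1) ** D ?d 1) = c (g ** D (1/?d) 1) + chi 1 * c (D ?d 1)"
      using coc dm d0 by (simp add: GL2_def D_def mk_det)
    then show ?thesis using e SL0[OF dm] chi1 phi_def by simp
  qed
  have phimult: "phi (a*b) = phi a + chi a * phi b" if "a \<noteq> 0" "b \<noteq> 0" for a b
  proof -
    have "D a 1 ** D b 1 = D (a*b) 1" by (simp add: D_def mk_mult)
    moreover have "c (D a 1 ** D b 1) = c (D a 1) + chi (det (D a 1)) * c (D b 1)"
      using that by (intro coc') (simp_all add: D_def mk_det)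
    ultimately show ?thesis unfolding phi_def by (simp add: D_def mk_det)
  qed
  have phisq: "phi (a*a) = 0" if "a \<noteq> 0" for a
  proof -
    have "c (D a a) = phi (a*a)" using cphi[of "D a a"] that by (simp add: D_def GL2_mk mk_det)
    moreover have "D a a = scalar_mat a" by (simp add: D_def mk_scalar)
    ultimately show ?thesis using sc that by simp
  qed
  have key: "(1 - chi b) * phi a = (1 - chi a) * phi b" if "a \<noteq> 0" "b \<noteq> 0" for a b
    using phimult[of a b] phimult[of b a] that by (simp add: mult.commute algebra_simps)
  show ?thesis
  proof (cases "\<exists>a0. a0 \<noteq> 0 \<and> chi a0 \<noteq> 1")
    case True
    then obtain a0 where a0: "a0 \<noteq> 0" "chi a0 \<noteq> 1" by blast
    show ?thesis
    proof (intro exI ballI)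
      fix g :: "'f^2^2" assume g: "g \<in> GL2"
      have d0: "det g \<noteq> 0" using g by (simp add: GL2_def)
      have "(1 - chi a0) * phi (det g) = (1 - chi (det g)) * phi a0" using key d0 a0 by blast
      then have "phi (det g) = (1 - chi (det g)) * (phi a0 / (1 - chi a0))"
        using a0 by (simp add: field_simps)
      then show "c g = (1 - chi (det g)) * (phi a0 / (1 - chi a0))" using cphi g by simp
    qed
  next
    case False
    show ?thesis
    proof (intro exI ballI)
      fix g :: "'f^2^2" assume g: "g \<in> GL2"
      have d0: "det g \<noteq> 0" using g by (simp add: GL2_def)
      have "phi (det g) + phi (det g) = 0" using phimult[OF d0 d0] phisq[OF d0] False d0 by auto
      then have "2 * phi (det g) = 0" by (metis mult_2)
      then have "phi (det g) = 0" using two by simp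
      then show "c g = (1 - chi (det g)) * 0" using cphi g by simp
    qed
  qed
qed

lemma val_pow:
  assumes "nonarch_local_field v" "\<pi> \<noteq> 0" "v \<pi> = 1"
  shows "v (\<pi> ^ k) = int k"
proof -
  have m: "\<forall>x y. x \<noteq> 0 \<longrightarrow> y \<noteq> 0 \<longrightarrow> v (x * y) = v x + v y"
    using assms(1) unfolding nonarch_local_field_def by blast
  show ?thesis
  proof (induction k)
    case 0
    have "v (1 * 1) = v 1 + v 1" using m[rule_format, of 1 1] by simp
    then show ?case by simp
  next
    case (Suc k)
    have "v (\<pi> * \<pi>^k) = v \<pi> + v (\<pi>^k)" using m[rule_format, of \<pi> "\<pi>^k"] assms(2) by simp
    then show ?case using Suc assms(3) by simp
  qed
qed

theorem lemma4p4:
  fixes v :: "'f::field \<Rightarrow> int"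
    and p l :: nat
    and chi :: "'f \<Rightarrow> 'k::field"
    and smul :: "'k \<Rightarrow> 'e::ab_group_add \<Rightarrow> 'e"
  assumes "nonarch_local_field v"
    and "(2::'f) \<noteq> 0"
    and "residual_char v p"
    and "prime l" and "odd l" and "l \<noteq> p"
    and "is_alg_closure_of_Fl TYPE('k) l"
    and "smooth_character v chi"
    and "\<forall>x. x \<noteq> 0 \<longrightarrow> chi x * chi x = 1"
  shows "ext1_triv_chidet_splits v chi smul"
  unfolding ext1_triv_chidet_splits_def
proof (intro allI impI, elim conjE)
  fix act :: "'f^2^2 \<Rightarrow> 'e \<Rightarrow> 'e" and i :: "'k \<Rightarrow> 'e" and q :: "'e \<Rightarrow> 'k"
  assume R: "smooth_rep_triv_central v smul act"
    and iLin: "Vector_Spaces.linear (*) smul i" and iinj: "inj i"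
    and qLin: "Vector_Spaces.linear smul (*) q" and qsurj: "surj q"
    and rng: "range i = {x. q x = 0}"
    and acti0: "\<forall>g\<in>GL2. \<forall>a. act g (i a) = i (chi (det g) * a)"
    and actq0: "\<forall>g\<in>GL2. \<forall>x. q (act g x) = q x"
  have VS: "vector_space smul" using R by (simp add: smooth_rep_triv_central_def)
  have actlin: "module_hom smul smul (act g)" if "g \<in> GL2" for g
    using R that by (simp add: smooth_rep_triv_central_def module_hom_iff_linear)
  have act1: "act (mat 1) x = x" for x using R by (simp add: smooth_rep_triv_central_def)
  have actmul: "act (g ** h) x = act g (act h x)" if "g \<in> GL2" "h \<in> GL2" for g h x
    using R that by (simp add: smooth_rep_triv_central_def)
  have smooth: "\<forall>x. \<exists>n\<ge>1. \<forall>g\<in>congr_subgroup v n. act g x = x"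
    using R by (simp add: smooth_rep_triv_central_def)
  have central: "act (scalar_mat z) x = x" if "z \<noteq> 0" for z x
    using R that by (simp add: smooth_rep_triv_central_def)
  have iL: "module_hom (*) smul i" using iLin module_hom_iff_linear by blast
  have qL: "module_hom smul (*) q" using qLin module_hom_iff_linear by blast
  have acti: "act g (i a) = i (chi (det g) * a)" if "g \<in> GL2" for g a using acti0 that by blast
  have actq: "q (act g x) = q x" if "g \<in> GL2" for g x using actq0 that by blast
  obtain e0 where e0: "q e0 = 1" using qsurj by (metis surjD)
  have inr: "act g e0 - e0 \<in> range i" if "g \<in> GL2" for g
    using rng actq[OF that] module_hom.diff[OF qL] by simp
  define c where "c g = inv i (act g e0 - e0)" for g
  have ic: "i (c g) = act g e0 - e0" if "g \<in> GL2" for g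
    unfolding c_def using inr[OF that] by (simp add: f_inv_into_f)
  have actg: "act g e0 = e0 + i (c g)" if "g \<in> GL2" for g using ic[OF that] by simp
  have GLmul: "g ** h \<in> GL2" if "g \<in> GL2" "h \<in> GL2" for g h :: "'f^2^2"
    using that by (simp add: GL2_def det_mul)
  have GL1: "mat 1 \<in> GL2" by (simp add: GL2_def)
  have coc: "\<forall>g\<in>GL2. \<forall>h\<in>GL2. c (g**h) = c g + chi(det g) * c h"
  proof (intro ballI)
    fix g h :: "'f^2^2" assume g: "g \<in> GL2" and h: "h \<in> GL2"
    have "i (c (g**h)) = act g (act h e0) - e0" using ic[OF GLmul[OF g h]] actmul[OF g h] by simp
    also have "\<dots> = act g e0 + act g (i (c h)) - e0"
      using actg[OF h] module_hom.add[OF actlin[OF g]] by simp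
    also have "\<dots> = i (c g) + i (chi (det g) * c h)" using actg[OF g] acti[OF g] by simp
    also have "\<dots> = i (c g + chi (det g) * c h)" using module_hom.add[OF iL] by simp
    finally show "c (g**h) = c g + chi(det g) * c h" using iinj by (simp add: inj_eq)
  qed
  have c0: "c g = 0" if "g \<in> GL2" "act g e0 = e0" for g
  proof -
    have "i (c g) = i 0" using ic[OF that(1)] that(2) module_hom.zero[OF iL] by simp
    then show ?thesis using iinj by (simp add: inj_eq)
  qed
  have one: "c (mat 1) = 0" using c0[OF GL1] act1 by simp
  have sc: "\<forall>z. z\<noteq>0 \<longrightarrow> c (scalar_mat z) = 0"
    using c0 central by (simp add: GL2_def mk_scalar mk_det)
  obtain n where n: "n \<ge> 1" "\<forall>g\<in>congr_subgroup v n. act g e0 = e0" using smooth by blast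
  obtain \<pi> where pi: "\<pi> \<noteq> 0" "v \<pi> = 1" using assms(1) unfolding nonarch_local_field_def by blast
  define y where "y = \<pi> ^ nat n"
  have y0: "y \<noteq> 0" using pi y_def by simp
  have vy: "val_ge v y n" using val_pow[OF assms(1) pi] n(1) y_def by (simp add: val_ge_def)
  have vz: "val_ge v 0 n" by (simp add: val_ge_def)
  have UG: "mk 1 y 0 1 \<in> GL2" by (simp add: GL2_mk)
  have UE: "\<forall>a b. val_ge v (mk 1 y 0 1 $ a $ b - mat 1 $ a $ b) n"
    unfolding mk_one forall_2 using vy vz by simp
  have UC: "mk 1 y 0 1 \<in> congr_subgroup v n"
    unfolding congr_subgroup_def using UG UE by blast
  have U0: "\<exists>y\<noteq>0. c (mk 1 y 0 1) = 0"
    using y0 c0[OF UG n(2)[rule_format, OF UC]] by blast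
  have LG: "mk 1 0 y 1 \<in> GL2" by (simp add: GL2_mk)
  have LE: "\<forall>a b. val_ge v (mk 1 0 y 1 $ a $ b - mat 1 $ a $ b) n"
    unfolding mk_one forall_2 using vy vz by simp
  have LC: "mk 1 0 y 1 \<in> congr_subgroup v n"
    unfolding congr_subgroup_def using LG LE by blast
  have L0: "\<exists>y\<noteq>0. c (mk 1 0 y 1) = 0"
    using y0 c0[OF LG n(2)[rule_format, OF LC]] by blast
  have two: "(2::'k) \<noteq> 0"
  proof
    assume "(2::'k) = 0"
    then have "of_nat 2 = (0::'k)" by simp
    then have "CHAR('k) dvd 2" by (simp only: of_nat_eq_0_iff_char_dvd)
    then have "l dvd 2" using assms(7) unfolding is_alg_closure_of_Fl_def by simp
    then have "l \<le> 2" by (simp add: dvd_imp_le)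
    moreover have "l \<ge> 2" using assms(4) by (simp add: prime_ge_2_nat)
    ultimately have "l = 2" by simp
    then show False using assms(5) by simp
  qed
  have chimult: "\<forall>x y. x\<noteq>0 \<longrightarrow> y\<noteq>0 \<longrightarrow> chi(x*y) = chi x * chi y"
    and chinz: "\<forall>x. x\<noteq>0 \<longrightarrow> chi x \<noteq> 0"
    using assms(8) by (simp_all add: smooth_character_def)
  obtain x where x: "\<forall>g\<in>GL2. c g = (1 - chi (det g)) * x"
    using cocycle_trivial[OF chimult chinz coc one U0 L0 sc two] by blast
  define e1 where "e1 = e0 + i x"
  have VSk: "vector_space ((*) :: 'k \<Rightarrow> 'k \<Rightarrow> 'k)" using Vector_Spaces.linear_iff[THEN iffD1, OF iLin, THEN conjunct1] .
  have "i x \<in> range i" by simp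
  then have qi: "q (i x) = 0" using rng by simp
  show "\<exists>s. Vector_Spaces.linear (*) smul s \<and> (\<forall>a. q (s a) = a) \<and> (\<forall>g\<in>GL2. \<forall>a. act g (s a) = s a)"
  proof (intro exI conjI allI ballI)
    show "Vector_Spaces.linear (*) smul (\<lambda>a. smul a e1)"
      unfolding Vector_Spaces.linear_iff using VSk VS
      by (simp add: vector_space_def)
    fix a
    show "q (smul a e1) = a" unfolding e1_def
      using module_hom.scale[OF qL] module_hom.add[OF qL] e0 qi by simp
  next
    fix g :: "'f^2^2" and a assume g: "g \<in> GL2"
    have "act g e1 = e0 + i (c g) + i (chi (det g) * x)"
      unfolding e1_def using module_hom.add[OF actlin[OF g]] actg[OF g] acti[OF g] by simp
    also have "\<dots> = e0 + i (c g + chi (det g) * x)" using module_hom.add[OF iL] by simp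
    also have "c g + chi (det g) * x = x" using x g by (simp add: algebra_simps)
    finally have "act g e1 = e1" unfolding e1_def by simp
    then show "act g (smul a e1) = smul a e1" using module_hom.scale[OF actlin[OF g]] by simp
  qed
qed
end
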